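(* Let $\mathcal M=(M,<,+,0,\ldots)$ be a definably complete locally o-minimal expansion of an ordered group. Let $(G,\tau)$ be a definable topological group having the definable curve selection property, $U$ a definable neighborhood of the identity $e$ in $G$, and $C$ a definably compact definable subset of $G$. Then $\bigcap_{h\in C}hUh^{-1}$ is a neighborhood of $e$.
   Context: "Definable" means definable in $\mathcal M$ with parameters. $\mathcal M$ is an expansion of an ordered group with dense order without endpoints; locally o-minimal: for every definable $Y\subseteq M$ and $a\in M$ there is an open interval $I\ni a$ with $Y\cap I$ a finite union of points and open intervals; definably complete: every definable subset of $M$ has sup and inf in $M\cup\{\pm\infty\}$. A definable topological group is a definable group with a topology having a definable open base in which multiplication and inversion are continuous. A definable subset is definably compact if, with the relative topology, every definable filtered family (any two members contain a common member) of nonempty closed subsets has nonempty intersection. A definable curve is a definable, not necessarily continuous, map from an open interval; for $\gamma:(a,b)\to X$, $\operatorname{Conv}_{\mathrm{left}}(\gamma)$ is the set of $x$ such that for every $t\in(a,b)$ and every definable neighborhood $A$ of $x$, $\gamma((a,t))\cap A\ne\emptyset$. A definable topological space $(X,\tau)$ has the definable curve selection property if for every definable $D\subseteq X$ and every $x$ in the frontier $\partial_\tau D$ there is a definable curve $\gamma:(a,b)\to D$ with $a\in M$ and $x\in\operatorname{Conv}_{\mathrm{left}}(\gamma)$. *)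

theory Defs
  imports "HOL-Analysis.Analysis" "HOL-Algebra.Group"
begin

text \<open>Points of M^n are lists of length n.  A structure on M (in the sense of
van den Dries) is given by the predicate S singling out the definable sets
(definable with parameters) of all arities.\<close>

definition arity :: "nat \<Rightarrow> 'm list set \<Rightarrow> bool" where
  "arity n A \<longleftrightarrow> (\<forall>x\<in>A. length x = n)"

definition fiber :: "'m list set \<Rightarrow> 'm list \<Rightarrow> nat \<Rightarrow> 'm list set" where
  "fiber F y n = {x. length x = n \<and> y @ x \<in> F}"

definition ordered_group :: "('m::linorder \<Rightarrow> 'm \<Rightarrow> 'm) \<Rightarrow> 'm \<Rightarrow> bool" where
  "ordered_group addm z \<longleftrightarrow>
     (\<forall>x y w. addm (addm x y) w = addm x (addm y w)) \<and>
     (\<forall>x. addm z x = x \<and> addm x z = x) \<and>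
     (\<forall>x. \<exists>y. addm x y = z \<and> addm y x = z) \<and>
     (\<forall>x y w. x < y \<longrightarrow> addm w x < addm w y \<and> addm x w < addm y w)"

definition definable_structure ::
  "('m::linorder \<Rightarrow> 'm \<Rightarrow> 'm) \<Rightarrow> ('m list set \<Rightarrow> bool) \<Rightarrow> bool" where
  "definable_structure addm S \<longleftrightarrow>
     (\<forall>A. S A \<longrightarrow> (\<exists>n. arity n A)) \<and>
     (\<forall>n. S {x. length x = n}) \<and>
     (\<forall>A B n. S A \<longrightarrow> S B \<longrightarrow> arity n A \<longrightarrow> arity n B \<longrightarrow> S (A \<union> B)) \<and>
     (\<forall>A B. S A \<longrightarrow> S B \<longrightarrow> S (A - B)) \<and>
     (\<forall>A B. S A \<longrightarrow> S B \<longrightarrow> S {x @ y | x y. x \<in> A \<and> y \<in> B}) \<and>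
     (\<forall>n i j. i < n \<longrightarrow> j < n \<longrightarrow> S {x. length x = n \<and> x ! i = x ! j}) \<and>
     (\<forall>A m. S A \<longrightarrow> S (take m ` A)) \<and>
     (\<forall>a. S {[a]}) \<and>
     S {[x, y] | x y. x < y} \<and>
     S {[x, y, w] | x y w. w = addm x y}"

definition def1 :: "('m list set \<Rightarrow> bool) \<Rightarrow> 'm set \<Rightarrow> bool" where
  "def1 S X \<longleftrightarrow> S ((\<lambda>x. [x]) ` X)"

definition locally_o_minimal :: "('m::linorder list set \<Rightarrow> bool) \<Rightarrow> bool" where
  "locally_o_minimal S \<longleftrightarrow>
     (\<forall>X a. def1 S X \<longrightarrow>
        (\<exists>l u. l < a \<and> a < u \<and>
           (\<exists>P Q. finite P \<and> finite Q \<and>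
              X \<inter> {l<..<u} = P \<union> (\<Union>(c, d)\<in>Q. {c<..<d}))))"

definition definably_complete :: "('m::linorder list set \<Rightarrow> bool) \<Rightarrow> bool" where
  "definably_complete S \<longleftrightarrow>
     (\<forall>X. def1 S X \<longrightarrow> X \<noteq> {} \<longrightarrow>
        ((bdd_above X \<longrightarrow> (\<exists>s. (\<forall>x\<in>X. x \<le> s) \<and> (\<forall>u. (\<forall>x\<in>X. x \<le> u) \<longrightarrow> s \<le> u))) \<and>
         (bdd_below X \<longrightarrow> (\<exists>s. (\<forall>x\<in>X. s \<le> x) \<and> (\<forall>u. (\<forall>x\<in>X. u \<le> x) \<longrightarrow> u \<le> s)))))"

definition definable_group ::
  "('m list set \<Rightarrow> bool) \<Rightarrow> nat \<Rightarrow> 'm list monoid \<Rightarrow> bool" where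
  "definable_group S n Gr \<longleftrightarrow>
     group Gr \<and> arity n (carrier Gr) \<and> S (carrier Gr) \<and>
     S {x @ y @ (x \<otimes>\<^bsub>Gr\<^esub> y) | x y. x \<in> carrier Gr \<and> y \<in> carrier Gr} \<and>
     S {x @ inv\<^bsub>Gr\<^esub> x | x. x \<in> carrier Gr}"

definition definable_open_base ::
  "('m list set \<Rightarrow> bool) \<Rightarrow> nat \<Rightarrow> 'm list topology \<Rightarrow> bool" where
  "definable_open_base S n \<tau> \<longleftrightarrow>
     (\<exists>k B. S B \<and> arity (k + n) B \<and>
        (\<forall>y. length y = k \<longrightarrow> openin \<tau> (fiber B y n)) \<and>
        (\<forall>W x. openin \<tau> W \<longrightarrow> x \<in> W \<longrightarrow>
           (\<exists>y. length y = k \<and> x \<in> fiber B y n \<and> fiber B y n \<subseteq> W)))"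

definition definable_topological_group ::
  "('m list set \<Rightarrow> bool) \<Rightarrow> nat \<Rightarrow> 'm list monoid \<Rightarrow> 'm list topology \<Rightarrow> bool" where
  "definable_topological_group S n Gr \<tau> \<longleftrightarrow>
     definable_group S n Gr \<and> topspace \<tau> = carrier Gr \<and> definable_open_base S n \<tau> \<and>
     continuous_map (prod_topology \<tau> \<tau>) \<tau> (\<lambda>(x, y). x \<otimes>\<^bsub>Gr\<^esub> y) \<and>
     continuous_map \<tau> \<tau> (\<lambda>x. inv\<^bsub>Gr\<^esub> x)"

definition definable_nbhd ::
  "('m list set \<Rightarrow> bool) \<Rightarrow> 'm list topology \<Rightarrow> 'm list set \<Rightarrow> 'm list \<Rightarrow> bool" where
  "definable_nbhd S \<tau> A x \<longleftrightarrow>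
     S A \<and> A \<subseteq> topspace \<tau> \<and> (\<exists>W. openin \<tau> W \<and> x \<in> W \<and> W \<subseteq> A)"

definition definably_compact ::
  "('m list set \<Rightarrow> bool) \<Rightarrow> nat \<Rightarrow> 'm list topology \<Rightarrow> 'm list set \<Rightarrow> bool" where
  "definably_compact S n \<tau> C \<longleftrightarrow>
     (\<forall>k Y F. S Y \<longrightarrow> arity k Y \<longrightarrow> Y \<noteq> {} \<longrightarrow> S F \<longrightarrow> arity (k + n) F \<longrightarrow>
        (\<forall>y\<in>Y. fiber F y n \<noteq> {} \<and> closedin (subtopology \<tau> C) (fiber F y n)) \<longrightarrow>
        (\<forall>y1\<in>Y. \<forall>y2\<in>Y. \<exists>y3\<in>Y. fiber F y3 n \<subseteq> fiber F y1 n \<inter> fiber F y2 n) \<longrightarrow>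
        (\<Inter>y\<in>Y. fiber F y n) \<noteq> {})"

text \<open>Open interval (a,b) with a \<in> M and b \<in> M \<union> {+\<infinity>} (None = +\<infinity>).\<close>
definition intv :: "'m::linorder \<Rightarrow> 'm option \<Rightarrow> 'm set" where
  "intv a b = {t. a < t \<and> (case b of None \<Rightarrow> True | Some b' \<Rightarrow> t < b')}"

definition conv_left ::
  "('m list set \<Rightarrow> bool) \<Rightarrow> 'm list topology \<Rightarrow> ('m::linorder \<Rightarrow> 'm list) \<Rightarrow> 'm \<Rightarrow> 'm option \<Rightarrow> 'm list set" where
  "conv_left S \<tau> \<gamma> a b = {x. \<forall>t\<in>intv a b. \<forall>A. definable_nbhd S \<tau> A x \<longrightarrow>
        \<gamma> ` {a<..<t} \<inter> A \<noteq> {}}"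

definition definable_curve_selection ::
  "('m::linorder list set \<Rightarrow> bool) \<Rightarrow> 'm list topology \<Rightarrow> bool" where
  "definable_curve_selection S \<tau> \<longleftrightarrow>
     (\<forall>D x. S D \<longrightarrow> D \<subseteq> topspace \<tau> \<longrightarrow> x \<in> (\<tau> closure_of D) - D \<longrightarrow>
        (\<exists>a b \<gamma>. (case b of None \<Rightarrow> True | Some b' \<Rightarrow> a < b') \<and>
            S {t # \<gamma> t | t. t \<in> intv a b} \<and> \<gamma> ` intv a b \<subseteq> D \<and>
            x \<in> conv_left S \<tau> \<gamma> a b))"

end

theory Submission
  imports Defs
begin

definition blk :: "nat \<Rightarrow> nat \<Rightarrow> 'a list \<Rightarrow> 'a list" where
  "blk p l w = take l (drop p w)"

definition sel :: "(nat \<times> nat) list \<Rightarrow> 'a list \<Rightarrow> 'a list" where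
  "sel bs w = concat (map (\<lambda>(p,l). blk p l w) bs)"

lemma blk_map: "p + l \<le> length w \<Longrightarrow> blk p l w = map (\<lambda>i. w ! (p+i)) [0..<l]"
  unfolding blk_def by (rule nth_equalityI) auto

lemma sel_as_map:
  "(\<forall>(p,l)\<in>set bs. p+l \<le> N) \<Longrightarrow> \<exists>\<pi> m. (\<forall>i<m. \<pi> i < N) \<and>
     (\<forall>w. length w = N \<longrightarrow> sel bs w = map (\<lambda>i. w ! \<pi> i) [0..<m])"
proof (induction bs)
  case Nil
  show ?case by (rule exI[of _ "\<lambda>i. 0"], rule exI[of _ 0]) (simp add: sel_def)
next
  case (Cons a bs)
  obtain p l where a: "a = (p,l)" by force
  have bsN: "\<forall>(p,l)\<in>set bs. p+l \<le> N" using Cons.prems by auto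
  obtain \<pi> m where pm: "\<forall>i<m. \<pi> i < N"
     "\<forall>w::'a list. length w = N \<longrightarrow> sel bs w = map (\<lambda>i. w ! \<pi> i) [0..<m]" using Cons.IH[OF bsN] by blast
  have pl: "p + l \<le> N" using Cons.prems a by auto
  define \<pi>' where "\<pi>' i = (if i < l then p + i else \<pi> (i - l))" for i
  show ?case
  proof (intro exI conjI allI impI)
    show "i < l + m \<Longrightarrow> \<pi>' i < N" for i using pm pl by (auto simp: \<pi>'_def)
    fix w :: "'a list" assume w: "length w = N"
    have "sel (a # bs) w = blk p l w @ sel bs w" by (simp add: sel_def a)
    also have "\<dots> = map (\<lambda>i. w ! (p+i)) [0..<l] @ map (\<lambda>i. w ! \<pi> i) [0..<m]"
      using pm(2) w pl by (simp add: blk_map)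
    also have "\<dots> = map (\<lambda>i. w ! \<pi>' i) [0..<l+m]"
    proof (rule nth_equalityI)
      show "length (map (\<lambda>i. w ! (p+i)) [0..<l] @ map (\<lambda>i. w ! \<pi> i) [0..<m]) =
            length (map (\<lambda>i. w ! \<pi>' i) [0..<l+m])" by simp
      fix i assume "i < length (map (\<lambda>i. w ! (p+i)) [0..<l] @ map (\<lambda>i. w ! \<pi> i) [0..<m])"
      then have i: "i < l + m" by simp
      show "(map (\<lambda>i. w ! (p+i)) [0..<l] @ map (\<lambda>i. w ! \<pi> i) [0..<m]) ! i =
            map (\<lambda>i. w ! \<pi>' i) [0..<l+m] ! i"
      proof (cases "i < l")
        case True
        then show ?thesis using i by (simp add: nth_append \<pi>'_def)
      next
        case False
        then have il: "i - l < m" using i by linarith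
        then show ?thesis using i False by (simp add: nth_append \<pi>'_def)
      qed
    qed
    finally show "sel (a # bs) w = map (\<lambda>i. w ! \<pi>' i) [0..<l+m]" .
  qed
qed

lemma ds_diff: "definable_structure addm S \<Longrightarrow> S A \<Longrightarrow> S B \<Longrightarrow> S (A - B)"
proof -
  assume a: "definable_structure addm S" "S A" "S B"
  from a(1) have "\<forall>A B. S A \<longrightarrow> S B \<longrightarrow> S (A - B)"
    unfolding definable_structure_def by (elim conjE) assumption
  then show ?thesis using a by blast
qed

lemma ds_prod: "definable_structure addm S \<Longrightarrow> S A \<Longrightarrow> S B \<Longrightarrow> S {x @ y | x y. x \<in> A \<and> y \<in> B}"
proof -
  assume a: "definable_structure addm S" "S A" "S B"
  from a(1) have "\<forall>A B. S A \<longrightarrow> S B \<longrightarrow> S {x @ y | x y. x \<in> A \<and> y \<in> B}"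
    unfolding definable_structure_def by (elim conjE) assumption
  then show ?thesis using a by blast
qed

lemma ds_take: "definable_structure addm S \<Longrightarrow> S A \<Longrightarrow> S (take m ` A)"
proof -
  assume a: "definable_structure addm S" "S A"
  from a(1) have "\<forall>A m. S A \<longrightarrow> S (take m ` A)"
    unfolding definable_structure_def by (elim conjE) assumption
  then show ?thesis using a by blast
qed

lemma ds_diag: "definable_structure addm S \<Longrightarrow> i < n \<Longrightarrow> j < n \<Longrightarrow> S {x. length x = n \<and> x ! i = x ! j}"
proof -
  assume a: "definable_structure addm S" "i < n" "j < n"
  from a(1) have "\<forall>n i j. i < n \<longrightarrow> j < n \<longrightarrow> S {x. length x = n \<and> x ! i = x ! j}"
    unfolding definable_structure_def by (elim conjE) assumption
  then show ?thesis using a by blast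
qed

lemma ds_single: "definable_structure addm S \<Longrightarrow> S {[a]}"
proof -
  assume a: "definable_structure addm S"
  from a(1) have "\<forall>a. S {[a]}"
    unfolding definable_structure_def by (elim conjE) assumption
  then show ?thesis by blast
qed

lemma S_full: "definable_structure addm S \<Longrightarrow> S {w. length w = N}"
proof -
  assume a: "definable_structure addm S"
  from a(1) have "\<forall>n. S {x. length x = n}"
    unfolding definable_structure_def by (elim conjE) assumption
  then show ?thesis by blast
qed

lemma S_inter: "definable_structure addm S \<Longrightarrow> S A \<Longrightarrow> S B \<Longrightarrow> S (A \<inter> B)"
proof -
  assume ds: "definable_structure addm S" and "S A" "S B"
  then have "S (A - (A - B))" by (meson ds_diff)
  moreover have "A - (A - B) = A \<inter> B" by blast
  ultimately show ?thesis by simp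
qed


lemma S_conj:
  assumes ds: "definable_structure addm S"
    and "S {w. length w = N \<and> P w}" "S {w. length w = N \<and> Q w}"
  shows "S {w. length w = N \<and> P w \<and> Q w}"
proof -
  have "{w. length w = N \<and> P w \<and> Q w} = {w. length w = N \<and> P w} \<inter> {w. length w = N \<and> Q w}" by blast
  then show ?thesis using S_inter[OF ds assms(2,3)] by simp
qed

lemma S_neg:
  assumes ds: "definable_structure addm S"
    and "S {w. length w = N \<and> P w}"
  shows "S {w. length w = N \<and> \<not> P w}"
proof -
  have "{w. length w = N \<and> \<not> P w} = {w. length w = N} - {w. length w = N \<and> P w}" by blast
  then show ?thesis using ds_diff[OF ds S_full[OF ds, of N] assms(2)] by simp
qed

lemma S_ex:
  assumes ds: "definable_structure addm S"
    and "S {w. length w = N + m \<and> P w}"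
  shows "S {v. length v = N \<and> (\<exists>u. length u = m \<and> P (v @ u))}"
proof -
  have "take N ` {w. length w = N + m \<and> P w} = {v. length v = N \<and> (\<exists>u. length u = m \<and> P (v @ u))}"
  proof (intro Set.set_eqI iffI)
    fix v assume "v \<in> take N ` {w. length w = N + m \<and> P w}"
    then obtain w where w: "length w = N + m" "P w" "v = take N w" by auto
    then show "v \<in> {v. length v = N \<and> (\<exists>u. length u = m \<and> P (v @ u))}"
      by (auto intro!: exI[of _ "drop N w"])
  next
    fix v assume "v \<in> {v. length v = N \<and> (\<exists>u. length u = m \<and> P (v @ u))}"
    then obtain u where "length v = N" "length u = m" "P (v @ u)" by auto
    then show "v \<in> take N ` {w. length w = N + m \<and> P w}"
      by (auto intro!: image_eqI[of _ _ "v @ u"])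
  qed
  then show ?thesis using ds_take[OF ds assms(2), of N] by simp
qed

lemma S_diag_all:
  assumes ds: "definable_structure addm S"
  shows "(\<forall>i<(j::nat). a i < N \<and> b i < N) \<Longrightarrow> S {w. length w = N \<and> (\<forall>i<j. w ! (a i) = w ! (b i))}"
proof (induction j)
  case 0
  then show ?case using S_full[OF ds, of N] by simp
next
  case (Suc j)
  have d: "S {w. length w = N \<and> w ! (a j) = w ! (b j)}"
    using ds_diag[OF ds] Suc.prems by blast
  have "{w. length w = N \<and> (\<forall>i<Suc j. w ! (a i) = w ! (b i))} =
        {w. length w = N \<and> (\<forall>i<j. w ! (a i) = w ! (b i))} \<inter> {w. length w = N \<and> w ! (a j) = w ! (b j)}"
    by (auto simp: less_Suc_eq)
  moreover have ih: "S {w. length w = N \<and> (\<forall>i<j. w ! (a i) = w ! (b i))}"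
    using Suc.IH Suc.prems by simp
  ultimately show ?case using S_inter[OF ds ih d] by metis
qed

lemma S_pre_map:
  assumes ds: "definable_structure addm S" and B: "S B" and pi: "\<forall>i<m. \<pi> i < N"
  shows "S {w. length w = N \<and> map (\<lambda>i. w ! \<pi> i) [0..<m] \<in> B}"
proof -
  let ?P = "{x @ y | x y. x \<in> {w. length w = N} \<and> y \<in> B}"
  have P: "S ?P" by (rule ds_prod[OF ds S_full[OF ds, of N] B])
  let ?D = "{w. length w = N + m \<and> (\<forall>i<m. w ! ((\<lambda>i. N + i) i) = w ! (\<pi> i))}"
  have D: "S ?D" by (rule S_diag_all[OF ds]) (use pi in auto)
  have eq: "take N ` (?P \<inter> ?D) = {w. length w = N \<and> map (\<lambda>i. w ! \<pi> i) [0..<m] \<in> B}"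
  proof (intro Set.set_eqI iffI)
    fix v assume "v \<in> take N ` (?P \<inter> ?D)"
    then obtain w where w: "w \<in> ?P" "w \<in> ?D" "v = take N w" by blast
    from w(1) obtain x y where xy0: "w = x @ y" "length x = N" "y \<in> B" by blast
    have xy: "length x = N" "y \<in> B" "length (x @ y) = N + m"
      "\<forall>i<m. (x @ y) ! (N + i) = (x @ y) ! (\<pi> i)" "v = take N (x @ y)"
      using w(2,3) xy0 by auto
    have ly: "length y = m" using xy by simp
    have "map (\<lambda>i. x ! \<pi> i) [0..<m] = y"
      using xy ly pi by (intro nth_equalityI) (auto simp: nth_append)
    then show "v \<in> {w. length w = N \<and> map (\<lambda>i. w ! \<pi> i) [0..<m] \<in> B}" using xy by simp
  next
    fix v assume v: "v \<in> {w. length w = N \<and> map (\<lambda>i. w ! \<pi> i) [0..<m] \<in> B}"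
    let ?y = "map (\<lambda>i. v ! \<pi> i) [0..<m]"
    have "v @ ?y \<in> ?P \<inter> ?D" using v pi by (auto simp: nth_append)
    then show "v \<in> take N ` (?P \<inter> ?D)" using v by (auto intro!: image_eqI[of _ _ "v @ ?y"])
  qed
  have "S (take N ` (?P \<inter> ?D))" by (rule ds_take[OF ds S_inter[OF ds P D]])
  then show ?thesis using eq by simp
qed

lemma S_pre:
  assumes ds: "definable_structure addm S" and B: "S B" and bs: "\<forall>(p,l)\<in>set bs. p+l \<le> N"
  shows "S {w. length w = N \<and> sel bs w \<in> B}"
proof -
  obtain \<pi> m where pm: "\<forall>i<m. \<pi> i < N" "\<forall>w::'a list. length w = N \<longrightarrow> sel bs w = map (\<lambda>i. w ! \<pi> i) [0..<m]"
    using sel_as_map[OF bs] by blast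
  have "{w. length w = N \<and> sel bs w \<in> B} = {w. length w = N \<and> map (\<lambda>i. w ! \<pi> i) [0..<m] \<in> B}"
    by (rule Collect_cong) (metis pm(2))
  then show ?thesis using S_pre_map[OF ds B pm(1)] by simp
qed

lemma S_singleton:
  assumes ds: "definable_structure addm S"
  shows "S {l}"
proof (induction l)
  case Nil
  have "{w::'a list. length w = 0} = {[]}" by auto
  then show ?case using S_full[OF ds, of 0] by simp
next
  case (Cons a l)
  have "S {x @ y | x y. x \<in> {[a]} \<and> y \<in> {l}}"
    by (rule ds_prod[OF ds ds_single[OF ds] Cons])
  moreover have "{x @ y | x y. x \<in> {[a]} \<and> y \<in> {l}} = {a # l}" by auto
  ultimately show ?case by simp
qed

lemma blk_app1: "length a \<le> p \<Longrightarrow> blk p l (a @ b) = blk (p - length a) l b"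
  by (simp add: blk_def)
lemma blk_app2: "p + l \<le> length a \<Longrightarrow> blk p l (a @ b) = blk p l a"
  by (simp add: blk_def)
lemma blk_full: "length a = l \<Longrightarrow> blk 0 l a = a"
  by (simp add: blk_def)

lemma blk_prefix: "length a = l \<Longrightarrow> blk 0 l (a @ b) = a"
  by (simp add: blk_def)

lemmas sel_simps = sel_def blk_app1 blk_app2 blk_full blk_prefix

theorem lemma5p3:
  fixes addm :: "'m::{dense_linorder,no_top,no_bot} \<Rightarrow> 'm \<Rightarrow> 'm"
    and z :: 'm
    and S :: "'m list set \<Rightarrow> bool"
    and n :: nat
    and Gr :: "'m list monoid"
    and \<tau> :: "'m list topology"
    and U C :: "'m list set"
  assumes "ordered_group addm z"
    and "definable_structure addm S"
    and "locally_o_minimal S"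
    and "definably_complete S"
    and "definable_topological_group S n Gr \<tau>"
    and "definable_curve_selection S \<tau>"
    and "definable_nbhd S \<tau> U \<one>\<^bsub>Gr\<^esub>"
    and "S C" and "C \<subseteq> carrier Gr"
    and "definably_compact S n \<tau> C"
  shows "\<exists>W. openin \<tau> W \<and> \<one>\<^bsub>Gr\<^esub> \<in> W \<and>
           W \<subseteq> (\<Inter>h\<in>C. {h \<otimes>\<^bsub>Gr\<^esub> u \<otimes>\<^bsub>Gr\<^esub> inv\<^bsub>Gr\<^esub> h | u. u \<in> U})"
proof -
  have ds: "definable_structure addm S" by fact
  have grp: "group Gr" and ar: "arity n (carrier Gr)"
    and SMul: "S {x @ y @ (x \<otimes>\<^bsub>Gr\<^esub> y) | x y. x \<in> carrier Gr \<and> y \<in> carrier Gr}"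
    and SInv: "S {x @ inv\<^bsub>Gr\<^esub> x | x. x \<in> carrier Gr}"
    and top: "topspace \<tau> = carrier Gr" and base: "definable_open_base S n \<tau>"
    and cmul: "continuous_map (prod_topology \<tau> \<tau>) \<tau> (\<lambda>(x, y). x \<otimes>\<^bsub>Gr\<^esub> y)"
    and cinv: "continuous_map \<tau> \<tau> (\<lambda>x. inv\<^bsub>Gr\<^esub> x)"
    using assms(5) unfolding definable_topological_group_def definable_group_def by auto
  interpret G: group Gr by (rule grp)
  have len: "\<And>x. x \<in> carrier Gr \<Longrightarrow> length x = n" using ar unfolding arity_def by blast
  obtain k B where SB: "S B" and arB: "arity (k+n) B"
    and Bopen: "\<And>y. length y = k \<Longrightarrow> openin \<tau> (fiber B y n)"
    and Bbase: "\<And>W x. openin \<tau> W \<Longrightarrow> x \<in> W \<Longrightarrow> \<exists>y. length y = k \<and> x \<in> fiber B y n \<and> fiber B y n \<subseteq> W"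
    using base unfolding definable_open_base_def by blast
  obtain W0 where W0: "openin \<tau> W0" "\<one>\<^bsub>Gr\<^esub> \<in> W0" "W0 \<subseteq> U"
    using assms(7) unfolding definable_nbhd_def by blast
  have SU: "S U" and Usub: "U \<subseteq> carrier Gr"
    using assms(7) top unfolding definable_nbhd_def by auto
  have SC: "S C" and CG: "C \<subseteq> carrier Gr" by fact+
  have Csub: "C \<subseteq> topspace \<tau>" using assms(9) top by simp
  define R where "R h g \<longleftrightarrow> (\<exists>u\<in>U. g = h \<otimes>\<^bsub>Gr\<^esub> u \<otimes>\<^bsub>Gr\<^esub> inv\<^bsub>Gr\<^esub> h)" for h g
  define E where "E y = {h \<in> C. \<exists>g\<in>fiber B y n. \<not> R h g}" for y
  define Y where "Y = {y. length y = k \<and> \<one>\<^bsub>Gr\<^esub> \<in> fiber B y n}"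
  define X where "X = subtopology \<tau> C"
  have fibsub: "\<And>y. length y = k \<Longrightarrow> fiber B y n \<subseteq> carrier Gr"
    using Bopen top openin_subset by metis
  show ?thesis
  proof (cases "\<exists>y\<in>Y. E y = {}")
    case True
    then obtain y where y: "y \<in> Y" "E y = {}" by blast
    show ?thesis
    proof (intro exI conjI)
      show "openin \<tau> (fiber B y n)" using y Bopen Y_def by auto
      show "\<one>\<^bsub>Gr\<^esub> \<in> fiber B y n" using y Y_def by auto
      show "fiber B y n \<subseteq> (\<Inter>h\<in>C. {h \<otimes>\<^bsub>Gr\<^esub> u \<otimes>\<^bsub>Gr\<^esub> inv\<^bsub>Gr\<^esub> h | u. u \<in> U})"
      proof (intro subsetI INT_I)
        fix g h assume "g \<in> fiber B y n" "h \<in> C"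
        then have "R h g" using y(2) unfolding E_def by blast
        then show "g \<in> {h \<otimes>\<^bsub>Gr\<^esub> u \<otimes>\<^bsub>Gr\<^esub> inv\<^bsub>Gr\<^esub> h | u. u \<in> U}" unfolding R_def by blast
      qed
    qed
  next
    case False
    hence Ene: "\<forall>y\<in>Y. E y \<noteq> {}" by blast
    have clos: "X closure_of (E y) = {x \<in> C. \<forall>y'. length y' = k \<longrightarrow> x \<in> fiber B y' n \<longrightarrow>
                     (\<exists>h\<in>E y. h \<in> fiber B y' n)}" for y
    proof -
      have EC: "E y \<subseteq> C" unfolding E_def by auto
      have "X closure_of (E y) = C \<inter> \<tau> closure_of (E y)"
      proof -
        have "C \<inter> E y = E y" using EC by blast
        then show ?thesis by (simp only: X_def closure_of_subtopology)
      qed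
      also have "\<dots> = {x \<in> C. \<forall>y'. length y' = k \<longrightarrow> x \<in> fiber B y' n \<longrightarrow>
                     (\<exists>h\<in>E y. h \<in> fiber B y' n)}"
      proof (intro Set.set_eqI iffI)
        fix x assume x: "x \<in> C \<inter> \<tau> closure_of (E y)"
        then show "x \<in> {x \<in> C. \<forall>y'. length y' = k \<longrightarrow> x \<in> fiber B y' n \<longrightarrow>
                     (\<exists>h\<in>E y. h \<in> fiber B y' n)}"
        proof -
          have xC: "x \<in> C" and xcl: "x \<in> \<tau> closure_of E y" using x by auto
          show ?thesis using xC xcl[unfolded in_closure_of] Bopen by blast
        qed
      next
        fix x assume x: "x \<in> {x \<in> C. \<forall>y'. length y' = k \<longrightarrow> x \<in> fiber B y' n \<longrightarrow>
                     (\<exists>h\<in>E y. h \<in> fiber B y' n)}"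
        have "x \<in> \<tau> closure_of (E y)"
          unfolding in_closure_of
        proof (intro conjI allI impI)
          show "x \<in> topspace \<tau>" using x Csub by auto
          fix T assume T: "x \<in> T \<and> openin \<tau> T"
          then obtain y' where "length y' = k" "x \<in> fiber B y' n" "fiber B y' n \<subseteq> T"
            using Bbase by blast
          then show "\<exists>h. h \<in> E y \<and> h \<in> T" using x by blast
        qed
        then show "x \<in> C \<inter> \<tau> closure_of (E y)" using x by auto
      qed
      finally show ?thesis .
    qed
    define Mul where "Mul = {x @ y @ (x \<otimes>\<^bsub>Gr\<^esub> y) | x y. x \<in> carrier Gr \<and> y \<in> carrier Gr}"
    define Inv where "Inv = {x @ inv\<^bsub>Gr\<^esub> x | x. x \<in> carrier Gr}"
    have memMul: "a @ b @ c \<in> Mul \<longleftrightarrow> a \<in> carrier Gr \<and> b \<in> carrier Gr \<and> c = a \<otimes>\<^bsub>Gr\<^esub> b"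
      if "length a = n" "length b = n" "length c = n" for a b c
    proof
      assume "a @ b @ c \<in> Mul"
      then obtain x y where xy: "a @ b @ c = x @ y @ (x \<otimes>\<^bsub>Gr\<^esub> y)" "x \<in> carrier Gr" "y \<in> carrier Gr"
        unfolding Mul_def by blast
      have "a = x \<and> b @ c = y @ (x \<otimes>\<^bsub>Gr\<^esub> y)" using xy that len[OF xy(2)]
        by (simp add: append_eq_append_conv)
      moreover then have "b = y \<and> c = x \<otimes>\<^bsub>Gr\<^esub> y" using xy that len[OF xy(3)]
        by (simp add: append_eq_append_conv)
      ultimately show "a \<in> carrier Gr \<and> b \<in> carrier Gr \<and> c = a \<otimes>\<^bsub>Gr\<^esub> b" using xy by simp
    next
      assume "a \<in> carrier Gr \<and> b \<in> carrier Gr \<and> c = a \<otimes>\<^bsub>Gr\<^esub> b"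
      then show "a @ b @ c \<in> Mul" unfolding Mul_def by blast
    qed
    have memInv: "a @ b \<in> Inv \<longleftrightarrow> a \<in> carrier Gr \<and> b = inv\<^bsub>Gr\<^esub> a"
      if "length a = n" "length b = n" for a b
    proof
      assume "a @ b \<in> Inv"
      then obtain x where xy: "a @ b = x @ inv\<^bsub>Gr\<^esub> x" "x \<in> carrier Gr"
        unfolding Inv_def by blast
      then show "a \<in> carrier Gr \<and> b = inv\<^bsub>Gr\<^esub> a" using that len[OF xy(2)]
        by (simp add: append_eq_append_conv)
    next
      assume "a \<in> carrier Gr \<and> b = inv\<^bsub>Gr\<^esub> a"
      then show "a @ b \<in> Inv" unfolding Inv_def by blast
    qed
    have SMul': "S Mul" using SMul Mul_def by simp
    have SInv': "S Inv" using SInv Inv_def by simp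
    define P0 where "P0 w \<longleftrightarrow> sel [(2*n,n)] w \<in> U \<and> sel [(0,n),(2*n,n),(3*n,n)] w \<in> Mul \<and>
        sel [(0,n),(4*n,n)] w \<in> Inv \<and> sel [(3*n,n),(4*n,n),(n,n)] w \<in> Mul" for w :: "'m list"
    have r0: "S {w. length w = n+n+n+n+n \<and> P0 w}"
    proof -
      have a1: "S {w. length w = n+n+n+n+n \<and> sel [(2*n,n)] w \<in> U}" by (rule S_pre[OF ds SU]) auto
      have a2: "S {w. length w = n+n+n+n+n \<and> sel [(0,n),(2*n,n),(3*n,n)] w \<in> Mul}" by (rule S_pre[OF ds SMul']) auto
      have a3: "S {w. length w = n+n+n+n+n \<and> sel [(0,n),(4*n,n)] w \<in> Inv}" by (rule S_pre[OF ds SInv']) auto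
      have a4: "S {w. length w = n+n+n+n+n \<and> sel [(3*n,n),(4*n,n),(n,n)] w \<in> Mul}" by (rule S_pre[OF ds SMul']) auto
      show ?thesis unfolding P0_def by (rule S_conj[OF ds a1 S_conj[OF ds a2 S_conj[OF ds a3 a4]]])
    qed
    define Rs where "Rs = {w. length w = n+n \<and> (\<exists>u. length u = n \<and> (\<exists>v. length v = n \<and>
         (\<exists>x. length x = n \<and> P0 (((w @ u) @ v) @ x))))}"
    have SRs: "S Rs" unfolding Rs_def by (rule S_ex[OF ds S_ex[OF ds S_ex[OF ds r0]]])
    have memR: "h @ g \<in> Rs \<longleftrightarrow> h \<in> carrier Gr \<and> R h g" if hg: "length h = n" "length g = n" for h g
    proof -
      have "h @ g \<in> Rs \<longleftrightarrow> (\<exists>u. length u = n \<and> (\<exists>v. length v = n \<and>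
         (\<exists>x. length x = n \<and> u \<in> U \<and> h @ u @ v \<in> Mul \<and> h @ x \<in> Inv \<and> v @ x @ g \<in> Mul)))"
        unfolding Rs_def P0_def using hg by (simp add: sel_simps cong: conj_cong)
      also have "\<dots> \<longleftrightarrow> h \<in> carrier Gr \<and> R h g"
      proof
        assume "\<exists>u. length u = n \<and> (\<exists>v. length v = n \<and>
         (\<exists>x. length x = n \<and> u \<in> U \<and> h @ u @ v \<in> Mul \<and> h @ x \<in> Inv \<and> v @ x @ g \<in> Mul))"
        then obtain u v x where uvx: "length u = n" "length v = n" "length x = n" "u \<in> U"
          "h @ u @ v \<in> Mul" "h @ x \<in> Inv" "v @ x @ g \<in> Mul" by blast
        have m1: "h \<in> carrier Gr \<and> u \<in> carrier Gr \<and> v = h \<otimes>\<^bsub>Gr\<^esub> u"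
          using memMul[OF hg(1) uvx(1) uvx(2)] uvx(5) by blast
        have m2: "x = inv\<^bsub>Gr\<^esub> h" using memInv[OF hg(1) uvx(3)] uvx(6) by blast
        have m3: "g = v \<otimes>\<^bsub>Gr\<^esub> x" using memMul[OF uvx(2) uvx(3) hg(2)] uvx(7) by blast
        show "h \<in> carrier Gr \<and> R h g" unfolding R_def using m1 m2 m3 uvx(4) by blast
      next
        assume a: "h \<in> carrier Gr \<and> R h g"
        then obtain u where u: "u \<in> U" "g = h \<otimes>\<^bsub>Gr\<^esub> u \<otimes>\<^bsub>Gr\<^esub> inv\<^bsub>Gr\<^esub> h" unfolding R_def by blast
        have uG: "u \<in> carrier Gr" using u Usub by blast
        show "\<exists>u. length u = n \<and> (\<exists>v. length v = n \<and>
         (\<exists>x. length x = n \<and> u \<in> U \<and> h @ u @ v \<in> Mul \<and> h @ x \<in> Inv \<and> v @ x @ g \<in> Mul))"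
        proof (intro exI conjI)
          have hG: "h \<in> carrier Gr" using a by blast
          have huG: "h \<otimes>\<^bsub>Gr\<^esub> u \<in> carrier Gr" using hG uG by simp
          have ihG: "inv\<^bsub>Gr\<^esub> h \<in> carrier Gr" using hG by simp
          show "length u = n" by (rule len[OF uG])
          show "length (h \<otimes>\<^bsub>Gr\<^esub> u) = n" by (rule len[OF huG])
          show "length (inv\<^bsub>Gr\<^esub> h) = n" by (rule len[OF ihG])
          show "u \<in> U" by (rule u(1))
          show "h @ u @ (h \<otimes>\<^bsub>Gr\<^esub> u) \<in> Mul"
            using memMul[OF hg(1) len[OF uG] len[OF huG]] hG uG by blast
          show "h @ inv\<^bsub>Gr\<^esub> h \<in> Inv"
            using memInv[OF hg(1) len[OF ihG]] hG by blast
          show "(h \<otimes>\<^bsub>Gr\<^esub> u) @ inv\<^bsub>Gr\<^esub> h @ g \<in> Mul"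
            using memMul[OF len[OF huG] len[OF ihG] hg(2)] huG ihG u(2) by blast
        qed
      qed
      finally show ?thesis .
    qed
    define P1 where "P1 w \<longleftrightarrow> sel [(k+n,k),(2*k+n,n)] w \<in> B \<and> sel [(2*k+n,n)] w \<in> C \<and>
        sel [(0,k),(2*k+2*n,n)] w \<in> B \<and> \<not> sel [(2*k+n,n),(2*k+2*n,n)] w \<in> Rs" for w :: "'m list"
    have t1: "S {w. length w = k+n+k+n+n \<and> P1 w}"
    proof -
      have a1: "S {w. length w = k+n+k+n+n \<and> sel [(k+n,k),(2*k+n,n)] w \<in> B}" by (rule S_pre[OF ds SB]) auto
      have a2: "S {w. length w = k+n+k+n+n \<and> sel [(2*k+n,n)] w \<in> C}" by (rule S_pre[OF ds SC]) auto
      have a3: "S {w. length w = k+n+k+n+n \<and> sel [(0,k),(2*k+2*n,n)] w \<in> B}" by (rule S_pre[OF ds SB]) auto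
      have a4: "S {w. length w = k+n+k+n+n \<and> sel [(2*k+n,n),(2*k+2*n,n)] w \<in> Rs}" by (rule S_pre[OF ds SRs]) auto
      show ?thesis unfolding P1_def by (rule S_conj[OF ds a1 S_conj[OF ds a2 S_conj[OF ds a3 S_neg[OF ds a4]]]])
    qed
    define T3 where "T3 v \<longleftrightarrow> (\<exists>h. length h = n \<and> (\<exists>g. length g = n \<and> P1 ((v @ h) @ g)))" for v :: "'m list"
    have t3: "S {v. length v = k+n+k \<and> T3 v}" unfolding T3_def by (rule S_ex[OF ds S_ex[OF ds t1]])
    define Q where "Q v \<longleftrightarrow> sel [(k+n,k),(k,n)] v \<in> B \<and> \<not> T3 v" for v :: "'m list"
    have q: "S {v. length v = k+n+k \<and> Q v}"
    proof -
      have a1: "S {w. length w = k+n+k \<and> sel [(k+n,k),(k,n)] w \<in> B}" by (rule S_pre[OF ds SB]) auto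
      show ?thesis unfolding Q_def by (rule S_conj[OF ds a1 S_neg[OF ds t3]])
    qed
    define F where "F = {v. length v = k+n \<and> sel [(k,n)] v \<in> C \<and> \<not> (\<exists>y'. length y' = k \<and> Q (v @ y'))}"
    have SF: "S F"
    proof -
      have a1: "S {w. length w = k+n \<and> sel [(k,n)] w \<in> C}" by (rule S_pre[OF ds SC]) auto
      show ?thesis unfolding F_def by (rule S_conj[OF ds a1 S_neg[OF ds S_ex[OF ds q]]])
    qed
    have arF: "arity (k+n) F" unfolding arity_def F_def by auto
    have fibF: "fiber F y n = X closure_of (E y)" if y: "length y = k" for y
    proof -
      have "fiber F y n = {x. length x = n \<and> x \<in> C \<and> \<not> (\<exists>y'. length y' = k \<and> y' @ x \<in> B \<and>
          \<not> (\<exists>h. length h = n \<and> (\<exists>g. length g = n \<and> y' @ h \<in> B \<and> h \<in> C \<and> y @ g \<in> B \<and>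
               \<not> (h @ g \<in> Rs))))}"
        unfolding fiber_def F_def Q_def T3_def P1_def using y
        by (intro Collect_cong) (auto simp: sel_simps cong: conj_cong)
      also have "\<dots> = X closure_of (E y)"
        unfolding clos
      proof (intro Set.set_eqI iffI)
        fix x assume "x \<in> {x. length x = n \<and> x \<in> C \<and> \<not> (\<exists>y'. length y' = k \<and> y' @ x \<in> B \<and>
          \<not> (\<exists>h. length h = n \<and> (\<exists>g. length g = n \<and> y' @ h \<in> B \<and> h \<in> C \<and> y @ g \<in> B \<and>
               \<not> (h @ g \<in> Rs))))}"
        then have xC: "x \<in> C" and xL: "\<And>y'. length y' = k \<Longrightarrow> y' @ x \<in> B \<Longrightarrow>
           (\<exists>h. length h = n \<and> (\<exists>g. length g = n \<and> y' @ h \<in> B \<and> h \<in> C \<and> y @ g \<in> B \<and>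
               \<not> (h @ g \<in> Rs)))" by blast+
        show "x \<in> {x \<in> C. \<forall>y'. length y' = k \<longrightarrow> x \<in> fiber B y' n \<longrightarrow> (\<exists>h\<in>E y. h \<in> fiber B y' n)}"
        proof (intro CollectI conjI allI impI)
          show "x \<in> C" by (rule xC)
          fix y' assume y': "length y' = k" "x \<in> fiber B y' n"
          then have "y' @ x \<in> B" unfolding fiber_def by blast
          then obtain h g where hg: "length h = n" "length g = n" "y' @ h \<in> B" "h \<in> C" "y @ g \<in> B"
              "\<not> (h @ g \<in> Rs)" using xL[OF y'(1)] by blast
          have hG: "h \<in> carrier Gr" using hg(4) CG by blast
          have "\<not> R h g" using hg(6) memR[OF hg(1) hg(2)] hG by blast
          then have "h \<in> E y" unfolding E_def fiber_def using hg by blast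
          moreover have "h \<in> fiber B y' n" unfolding fiber_def using hg by blast
          ultimately show "\<exists>h\<in>E y. h \<in> fiber B y' n" by blast
        qed
      next
        fix x assume x: "x \<in> {x \<in> C. \<forall>y'. length y' = k \<longrightarrow> x \<in> fiber B y' n \<longrightarrow> (\<exists>h\<in>E y. h \<in> fiber B y' n)}"
        then have xC: "x \<in> C" and xR: "\<And>y'. length y' = k \<Longrightarrow> x \<in> fiber B y' n \<Longrightarrow> (\<exists>h\<in>E y. h \<in> fiber B y' n)"
          by blast+
        have lx: "length x = n" using xC CG len by blast
        have "\<not> (\<exists>y'. length y' = k \<and> y' @ x \<in> B \<and>
          \<not> (\<exists>h. length h = n \<and> (\<exists>g. length g = n \<and> y' @ h \<in> B \<and> h \<in> C \<and> y @ g \<in> B \<and>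
               \<not> (h @ g \<in> Rs))))"
        proof
          assume "\<exists>y'. length y' = k \<and> y' @ x \<in> B \<and>
          \<not> (\<exists>h. length h = n \<and> (\<exists>g. length g = n \<and> y' @ h \<in> B \<and> h \<in> C \<and> y @ g \<in> B \<and>
               \<not> (h @ g \<in> Rs)))"
          then obtain y' where y': "length y' = k" "y' @ x \<in> B" and
            no: "\<not> (\<exists>h. length h = n \<and> (\<exists>g. length g = n \<and> y' @ h \<in> B \<and> h \<in> C \<and> y @ g \<in> B \<and>
               \<not> (h @ g \<in> Rs)))" by blast
          have "x \<in> fiber B y' n" unfolding fiber_def using y' lx by blast
          then obtain h where h: "h \<in> E y" "h \<in> fiber B y' n" using xR[OF y'(1)] by blast
          then obtain g where hC: "h \<in> C" and g: "g \<in> fiber B y n" and nR: "\<not> R h g"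
            unfolding E_def by blast
          have lh: "length h = n" and hB: "y' @ h \<in> B" using h(2) unfolding fiber_def by blast+
          have lg: "length g = n" and gB: "y @ g \<in> B" using g unfolding fiber_def by blast+
          have "\<not> (h @ g \<in> Rs)" using memR[OF lh lg] nR by blast
          then show False using no lh lg hB hC gB by blast
        qed
        then show "x \<in> {x. length x = n \<and> x \<in> C \<and> \<not> (\<exists>y'. length y' = k \<and> y' @ x \<in> B \<and>
          \<not> (\<exists>h. length h = n \<and> (\<exists>g. length g = n \<and> y' @ h \<in> B \<and> h \<in> C \<and> y @ g \<in> B \<and>
               \<not> (h @ g \<in> Rs))))}" using xC lx by blast
      qed
      finally show ?thesis .
    qed
    have SY: "S Y"
    proof -
      have a1: "S {w. length w = k+n \<and> sel [(0,k+n)] w \<in> B}" by (rule S_pre[OF ds SB]) auto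
      have a2: "S {w. length w = k+n \<and> sel [(k,n)] w \<in> {\<one>\<^bsub>Gr\<^esub>}}" by (rule S_pre[OF ds S_singleton[OF ds]]) auto
      have "S {v. length v = k \<and> (\<exists>u. length u = n \<and> (sel [(0,k+n)] (v @ u) \<in> B \<and> sel [(k,n)] (v @ u) \<in> {\<one>\<^bsub>Gr\<^esub>}))}"
        by (rule S_ex[OF ds S_conj[OF ds a1 a2]])
      moreover have "{v. length v = k \<and> (\<exists>u. length u = n \<and> (sel [(0,k+n)] (v @ u) \<in> B \<and> sel [(k,n)] (v @ u) \<in> {\<one>\<^bsub>Gr\<^esub>}))} = Y"
        unfolding Y_def fiber_def by (intro Collect_cong) (auto simp: sel_simps cong: conj_cong)
      ultimately show ?thesis by simp
    qed
    have arY: "arity k Y" unfolding arity_def Y_def by auto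
    have oneT: "\<one>\<^bsub>Gr\<^esub> \<in> topspace \<tau>" using top by simp
    have Yne: "Y \<noteq> {}"
      using Bbase[OF openin_topspace oneT] unfolding Y_def by blast
    have fibs: "\<forall>y\<in>Y. fiber F y n \<noteq> {} \<and> closedin (subtopology \<tau> C) (fiber F y n)"
    proof
      fix y assume y: "y \<in> Y"
      have "E y \<subseteq> topspace X" unfolding X_def E_def using Csub by auto
      then have "E y \<subseteq> X closure_of (E y)" by (rule closure_of_subset)
      then show "fiber F y n \<noteq> {} \<and> closedin (subtopology \<tau> C) (fiber F y n)"
        using Ene y fibF[of y] unfolding Y_def X_def by auto
    qed
    have filt: "\<forall>y1\<in>Y. \<forall>y2\<in>Y. \<exists>y3\<in>Y. fiber F y3 n \<subseteq> fiber F y1 n \<inter> fiber F y2 n"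
    proof (intro ballI)
      fix y1 y2 assume y1: "y1 \<in> Y" and y2: "y2 \<in> Y"
      have "openin \<tau> (fiber B y1 n \<inter> fiber B y2 n)" using y1 y2 Bopen unfolding Y_def by auto
      moreover have "\<one>\<^bsub>Gr\<^esub> \<in> fiber B y1 n \<inter> fiber B y2 n" using y1 y2 unfolding Y_def by auto
      ultimately obtain y3 where y3: "length y3 = k" "\<one>\<^bsub>Gr\<^esub> \<in> fiber B y3 n"
          "fiber B y3 n \<subseteq> fiber B y1 n \<inter> fiber B y2 n" using Bbase by blast
      have "E y3 \<subseteq> E y1" "E y3 \<subseteq> E y2" using y3(3) unfolding E_def by blast+
      then have "X closure_of E y3 \<subseteq> X closure_of E y1 \<inter> X closure_of E y2"
        by (simp add: closure_of_mono)
      then show "\<exists>y3\<in>Y. fiber F y3 n \<subseteq> fiber F y1 n \<inter> fiber F y2 n"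
        using y1 y2 y3 fibF unfolding Y_def by (intro bexI[of _ y3]) auto
    qed
    have "(\<Inter>y\<in>Y. fiber F y n) \<noteq> {}"
      using assms(10) unfolding definably_compact_def
      using SY arY Yne SF arF fibs filt by blast
    then obtain h0 where h0: "\<And>y. y \<in> Y \<Longrightarrow> h0 \<in> X closure_of (E y)"
      using fibF unfolding Y_def by auto
    have h0C: "h0 \<in> C"
    proof -
      obtain y0 where y0: "y0 \<in> Y" using Yne by blast
      have "X closure_of E y0 \<subseteq> C" unfolding X_def by (rule closure_of_subset_subtopology)
      then show ?thesis using h0[OF y0] by blast
    qed
    have h0G: "h0 \<in> carrier Gr" using h0C CG by blast
    define \<phi> where "\<phi> = (\<lambda>p. inv\<^bsub>Gr\<^esub> (fst p) \<otimes>\<^bsub>Gr\<^esub> snd p \<otimes>\<^bsub>Gr\<^esub> fst p)"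
    have c\<phi>: "continuous_map (prod_topology \<tau> \<tau>) \<tau> \<phi>"
    proof -
      have c1: "continuous_map (prod_topology \<tau> \<tau>) \<tau> (\<lambda>p. inv\<^bsub>Gr\<^esub> (fst p))"
        using continuous_map_compose[OF continuous_map_fst cinv] by (simp add: o_def)
      have c2: "continuous_map (prod_topology \<tau> \<tau>) \<tau> (\<lambda>p. inv\<^bsub>Gr\<^esub> (fst p) \<otimes>\<^bsub>Gr\<^esub> snd p)"
        using continuous_map_compose[OF continuous_map_pairedI[OF c1 continuous_map_snd] cmul] by (simp add: o_def)
      have c3: "continuous_map (prod_topology \<tau> \<tau>) \<tau> (\<lambda>p. inv\<^bsub>Gr\<^esub> (fst p) \<otimes>\<^bsub>Gr\<^esub> snd p \<otimes>\<^bsub>Gr\<^esub> fst p)"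
        using continuous_map_compose[OF continuous_map_pairedI[OF c2 continuous_map_fst] cmul] by (simp add: o_def)
      then show ?thesis unfolding \<phi>_def .
    qed
    have "openin (prod_topology \<tau> \<tau>) {p \<in> topspace (prod_topology \<tau> \<tau>). \<phi> p \<in> W0}"
      by (rule openin_continuous_map_preimage[OF c\<phi> W0(1)])
    then have opre: "\<forall>x y. (x, y) \<in> {p \<in> topspace (prod_topology \<tau> \<tau>). \<phi> p \<in> W0} \<longrightarrow>
       (\<exists>U V. openin \<tau> U \<and> openin \<tau> V \<and> x \<in> U \<and> y \<in> V \<and>
          U \<times> V \<subseteq> {p \<in> topspace (prod_topology \<tau> \<tau>). \<phi> p \<in> W0})"
      by (simp only: openin_prod_topology_alt)
    have phi1: "\<phi> (h0, \<one>\<^bsub>Gr\<^esub>) = \<one>\<^bsub>Gr\<^esub>"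
    proof -
      have "\<phi> (h0, \<one>\<^bsub>Gr\<^esub>) = inv\<^bsub>Gr\<^esub> h0 \<otimes>\<^bsub>Gr\<^esub> \<one>\<^bsub>Gr\<^esub> \<otimes>\<^bsub>Gr\<^esub> h0"
        by (simp only: \<phi>_def fst_conv snd_conv)
      also have "\<dots> = inv\<^bsub>Gr\<^esub> h0 \<otimes>\<^bsub>Gr\<^esub> h0"
        using h0G by (simp only: G.r_one G.inv_closed)
      also have "\<dots> = \<one>\<^bsub>Gr\<^esub>" using h0G by (rule G.l_inv)
      finally show ?thesis .
    qed
    have "(h0, \<one>\<^bsub>Gr\<^esub>) \<in> {p \<in> topspace (prod_topology \<tau> \<tau>). \<phi> p \<in> W0}"
    proof -
      have "(h0, \<one>\<^bsub>Gr\<^esub>) \<in> topspace (prod_topology \<tau> \<tau>)"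
        unfolding topspace_prod_topology top using h0G G.one_closed by blast
      then show ?thesis using phi1 W0(2) by simp
    qed
    note ex = mp[OF spec[OF spec[OF opre, of h0], of "\<one>\<^bsub>Gr\<^esub>"] this]
    from ex obtain N V where NV: "openin \<tau> N" "openin \<tau> V" "h0 \<in> N" "\<one>\<^bsub>Gr\<^esub> \<in> V"
        "N \<times> V \<subseteq> {p \<in> topspace (prod_topology \<tau> \<tau>). \<phi> p \<in> W0}"
      by (elim exE conjE)
    obtain y where y: "length y = k" "\<one>\<^bsub>Gr\<^esub> \<in> fiber B y n" "fiber B y n \<subseteq> V"
      using Bbase[OF NV(2) NV(4)] by blast
    have yY: "y \<in> Y" using y unfolding Y_def by auto
    have "openin X (C \<inter> N)" unfolding X_def by (rule openin_subtopology_Int2[OF NV(1)])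
    moreover have "h0 \<in> C \<inter> N" using h0C NV(3) by blast
    ultimately obtain z where zE: "z \<in> E y" and zN: "z \<in> N"
      using h0[OF yY] unfolding in_closure_of by blast
    then obtain g where zC: "z \<in> C" and g: "g \<in> fiber B y n" and nR: "\<not> R z g"
      unfolding E_def by blast
    have zG: "z \<in> carrier Gr" using zC CG by blast
    have gG: "g \<in> carrier Gr" using g fibsub[OF y(1)] by blast
    have "(z, g) \<in> N \<times> V" using zN g y(3) by blast
    then have "\<phi> (z, g) \<in> U" using NV(5) W0(3) by blast
    then have uU: "inv\<^bsub>Gr\<^esub> z \<otimes>\<^bsub>Gr\<^esub> g \<otimes>\<^bsub>Gr\<^esub> z \<in> U" by (simp add: \<phi>_def)
    have "z \<otimes>\<^bsub>Gr\<^esub> (inv\<^bsub>Gr\<^esub> z \<otimes>\<^bsub>Gr\<^esub> g \<otimes>\<^bsub>Gr\<^esub> z) \<otimes>\<^bsub>Gr\<^esub> inv\<^bsub>Gr\<^esub> z = g"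
      using zG gG by (simp flip: G.m_assoc) (simp add: G.m_assoc)
    then have geq: "g = z \<otimes>\<^bsub>Gr\<^esub> (inv\<^bsub>Gr\<^esub> z \<otimes>\<^bsub>Gr\<^esub> g \<otimes>\<^bsub>Gr\<^esub> z) \<otimes>\<^bsub>Gr\<^esub> inv\<^bsub>Gr\<^esub> z"
      by (rule sym)
    have "R z g" unfolding R_def using uU geq by blast
    with nR show ?thesis by blast
  qed
qed
end
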